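(* Let $R=(r_{i,j})_{i,j=0}^{n-1}$ be a complex Hermitian positive definite matrix, and let $0\le s<d\le n-1$. Let $M={}^0R^{s,d}$ be the $n\times n$ matrix with entries $M_{i,j}=r_{i,j}$ if $s\le i,j\le d$ and $M_{i,j}=0$ otherwise. Then for all $s\le k<l\le d$, the quantities $p^M_{k,l},q^M_{k,l},a^M_{k,l},a'^M_{k,l},v^M_{k,l},v'^M_{k,l}$ obtained by running the generalized reflection coefficient recursion on $M$ are well defined and $$\big(p^M_{k,l},q^M_{k,l},a^M_{k,l},a'^M_{k,l},v^M_{k,l},v'^M_{k,l}\big)=\big(p^R_{k,l},q^R_{k,l},a^R_{k,l},a'^R_{k,l},v^R_{k,l},v'^R_{k,l}\big).$$
   Context: Generalized reflection coefficient recursion for a complex $n\times n$ matrix $M$ (indices $0,\dots,n-1$; $e_0,\dots,e_{n-1}$ the canonical basis column vectors of $\mathbb{C}^n$): set $p^M_{k,k}=q^M_{k,k}=e_k$ for all $k$; define $v^M_{k,l}:=(q^M_{k,l})^TMe_l$ and $v'^M_{k,l}:=(p^M_{k,l})^TMe_k$; and for $0\le k<l\le n-1$, recursively in $l-k$, $a^M_{k,l}=\dfrac{(p^M_{k,l-1})^TMe_l}{v^M_{k+1,l}}$, $a'^M_{k,l}=\dfrac{(q^M_{k+1,l})^TMe_k}{v'^M_{k,l-1}}$, $p^M_{k,l}=p^M_{k,l-1}-a^M_{k,l}q^M_{k+1,l}$, $q^M_{k,l}=q^M_{k+1,l}-a'^M_{k,l}p^M_{k,l-1}$ (the quantities are well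 defined when the denominators involved are nonzero; for Hermitian positive definite $M$ they are positive reals). The superscript $R$ denotes the same quantities computed for $M=R$. *)

theory Defs
  imports Complex_Main
begin

definition evec :: "nat \<Rightarrow> nat \<Rightarrow> complex" where
  "evec k = (\<lambda>i. if i = k then 1 else 0)"

text \<open>x^T M e_j  (plain transpose, no conjugation)\<close>
definition bil :: "nat \<Rightarrow> (nat \<Rightarrow> nat \<Rightarrow> complex) \<Rightarrow> (nat \<Rightarrow> complex) \<Rightarrow> nat \<Rightarrow> complex" where
  "bil n M x j = (\<Sum>i<n. x i * M i j)"

text \<open>The pair (p_{k,l}, q_{k,l}); for l <= k it is (e_k, e_k).
  Division by zero yields 0 in HOL, so well-definedness is stated separately.\<close>
function pq :: "nat \<Rightarrow> (nat \<Rightarrow> nat \<Rightarrow> complex) \<Rightarrow> nat \<Rightarrow> nat \<Rightarrow> (nat \<Rightarrow> complex) \<times> (nat \<Rightarrow> complex)" where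
  "pq n M k l =
    (if l \<le> k then (evec k, evec k)
     else (let p1 = fst (pq n M k (l - 1)); q2 = snd (pq n M (Suc k) l);
               a = bil n M p1 l / bil n M q2 l;
               a' = bil n M q2 k / bil n M p1 k
           in (\<lambda>i. p1 i - a * q2 i, \<lambda>i. q2 i - a' * p1 i)))"
  by pat_completeness auto
termination by (relation "measure (\<lambda>(n, M, k, l). l - k)") auto

definition pvec :: "nat \<Rightarrow> (nat \<Rightarrow> nat \<Rightarrow> complex) \<Rightarrow> nat \<Rightarrow> nat \<Rightarrow> nat \<Rightarrow> complex" where
  "pvec n M k l = fst (pq n M k l)"

definition qvec :: "nat \<Rightarrow> (nat \<Rightarrow> nat \<Rightarrow> complex) \<Rightarrow> nat \<Rightarrow> nat \<Rightarrow> nat \<Rightarrow> complex" where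
  "qvec n M k l = snd (pq n M k l)"

definition vv :: "nat \<Rightarrow> (nat \<Rightarrow> nat \<Rightarrow> complex) \<Rightarrow> nat \<Rightarrow> nat \<Rightarrow> complex" where
  "vv n M k l = bil n M (qvec n M k l) l"

definition vv' :: "nat \<Rightarrow> (nat \<Rightarrow> nat \<Rightarrow> complex) \<Rightarrow> nat \<Rightarrow> nat \<Rightarrow> complex" where
  "vv' n M k l = bil n M (pvec n M k l) k"

definition acoef :: "nat \<Rightarrow> (nat \<Rightarrow> nat \<Rightarrow> complex) \<Rightarrow> nat \<Rightarrow> nat \<Rightarrow> complex" where
  "acoef n M k l = bil n M (pvec n M k (l - 1)) l / vv n M (Suc k) l"

definition acoef' :: "nat \<Rightarrow> (nat \<Rightarrow> nat \<Rightarrow> complex) \<Rightarrow> nat \<Rightarrow> nat \<Rightarrow> complex" where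
  "acoef' n M k l = bil n M (qvec n M (Suc k) l) k / vv' n M k (l - 1)"

definition well_defined_at :: "nat \<Rightarrow> (nat \<Rightarrow> nat \<Rightarrow> complex) \<Rightarrow> nat \<Rightarrow> nat \<Rightarrow> bool" where
  "well_defined_at n M k l \<longleftrightarrow> vv n M (Suc k) l \<noteq> 0 \<and> vv' n M k (l - 1) \<noteq> 0"

definition hermitian_mat :: "nat \<Rightarrow> (nat \<Rightarrow> nat \<Rightarrow> complex) \<Rightarrow> bool" where
  "hermitian_mat n R \<longleftrightarrow> (\<forall>i<n. \<forall>j<n. R i j = cnj (R j i))"

definition pos_def_mat :: "nat \<Rightarrow> (nat \<Rightarrow> nat \<Rightarrow> complex) \<Rightarrow> bool" where
  "pos_def_mat n R \<longleftrightarrow> hermitian_mat n R \<and>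
     (\<forall>x :: nat \<Rightarrow> complex. (\<exists>i<n. x i \<noteq> 0) \<longrightarrow>
        (\<Sum>i<n. \<Sum>j<n. cnj (x i) * R i j * x j) \<in> \<real> \<and>
        Re (\<Sum>i<n. \<Sum>j<n. cnj (x i) * R i j * x j) > 0)"

definition trunc_mat :: "(nat \<Rightarrow> nat \<Rightarrow> complex) \<Rightarrow> nat \<Rightarrow> nat \<Rightarrow> nat \<Rightarrow> nat \<Rightarrow> complex" where
  "trunc_mat R s d = (\<lambda>i j. if s \<le> i \<and> i \<le> d \<and> s \<le> j \<and> j \<le> d then R i j else 0)"

end

theory Submission
  imports Defs
begin

lemma pq_base: "l \<le> k \<Longrightarrow> pq n M k l = (evec k, evec k)"
  by (subst pq.simps) simp

lemma pvec_base: "l \<le> k \<Longrightarrow> pvec n M k l = evec k"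
  by (simp add: pvec_def pq_base)

lemma qvec_base: "l \<le> k \<Longrightarrow> qvec n M k l = evec k"
  by (simp add: qvec_def pq_base)

lemma pvec_step: "k < l \<Longrightarrow> pvec n M k l =
   (\<lambda>i. pvec n M k (l-1) i - acoef n M k l * qvec n M (Suc k) l i)"
  unfolding pvec_def acoef_def vv_def qvec_def
  by (subst pq.simps) (simp add: Let_def)

lemma qvec_step: "k < l \<Longrightarrow> qvec n M k l =
   (\<lambda>i. qvec n M (Suc k) l i - acoef' n M k l * pvec n M k (l-1) i)"
  unfolding pvec_def acoef'_def vv'_def qvec_def
  by (subst pq.simps) (simp add: Let_def)

lemma bil_lin: "bil n M (\<lambda>i. x i - c * y i) j = bil n M x j - c * bil n M y j"
  unfolding bil_def by (simp add: sum_subtractf sum_distrib_left algebra_simps)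

lemma supp: "k \<le> l \<Longrightarrow> (i < k \<or> l < i) \<Longrightarrow> pvec n M k l i = 0 \<and> qvec n M k l i = 0"
proof (induct "l - k" arbitrary: k l rule: less_induct)
  case less
  show ?case
  proof (cases "k = l")
    case True
    then show ?thesis using less by (auto simp add: pvec_base qvec_base evec_def)
  next
    case False
    then have kl: "k < l" using less by simp
    have A: "pvec n M k (l-1) i = 0 \<and> qvec n M k (l-1) i = 0"
      using less(1)[of "l-1" k] less(2,3) kl by auto
    have B: "pvec n M (Suc k) l i = 0 \<and> qvec n M (Suc k) l i = 0"
      using less(1)[of l "Suc k"] less(2,3) kl by auto
    show ?thesis using A B kl by (simp add: pvec_step qvec_step)
  qed
qed

definition inv :: "nat \<Rightarrow> (nat \<Rightarrow> nat \<Rightarrow> complex) \<Rightarrow> nat \<Rightarrow> nat \<Rightarrow> bool" where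
  "inv n R k l \<longleftrightarrow> pvec n R k l k = 1 \<and> qvec n R k l l = 1 \<and>
     (\<forall>j. k < j \<and> j \<le> l \<longrightarrow> bil n R (pvec n R k l) j = 0) \<and>
     (\<forall>j. k \<le> j \<and> j < l \<longrightarrow> bil n R (qvec n R k l) j = 0)"

lemma form_pos:
  assumes "pos_def_mat n R" "x i \<noteq> 0" "i < n"
  shows "Re (\<Sum>i<n. \<Sum>j<n. cnj (x i) * R i j * x j) > 0"
  using assms unfolding pos_def_mat_def by blast

lemma vv_nz:
  assumes P: "pos_def_mat n R" and "k \<le> l" "l < n" and I: "inv n R k l"
  shows "vv n R k l \<noteq> 0"
proof -
  define q where "q = qvec n R k l"
  have "(\<Sum>i<n. \<Sum>j<n. cnj (cnj (q i)) * R i j * cnj (q j))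
      = (\<Sum>j<n. \<Sum>i<n. q i * R i j * cnj (q j))"
    by (subst sum.swap) simp
  also have "\<dots> = (\<Sum>j<n. cnj (q j) * bil n R q j)"
    unfolding bil_def by (simp add: sum_distrib_left algebra_simps)
  also have "\<dots> = (\<Sum>j<n. if j = l then vv n R k l else 0)"
  proof (rule sum.cong[OF refl])
    fix j assume "j \<in> {..<n}"
    show "cnj (q j) * bil n R q j = (if j = l then vv n R k l else 0)"
    proof (cases "j < k \<or> l < j")
      case True
      then show ?thesis using supp[of k l j n R] assms(2) by (auto simp: q_def)
    next
      case False
      then show ?thesis using I unfolding inv_def vv_def q_def by auto
    qed
  qed
  also have "\<dots> = vv n R k l" using assms(3) by simp
  finally have E: "(\<Sum>i<n. \<Sum>j<n. cnj (cnj (q i)) * R i j * cnj (q j)) = vv n R k l" .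
  have nz: "cnj (q l) \<noteq> 0" using I by (simp add: inv_def q_def)
  have G: "Re (\<Sum>i<n. \<Sum>j<n. cnj (cnj (q i)) * R i j * cnj (q j)) > 0"
    by (rule form_pos[OF P, of "\<lambda>i. cnj (q i)" l]) (use nz assms in auto)
  then show ?thesis unfolding E by auto
qed

lemma vv'_nz:
  assumes P: "pos_def_mat n R" and "k \<le> l" "l < n" and I: "inv n R k l"
  shows "vv' n R k l \<noteq> 0"
proof -
  define q where "q = pvec n R k l"
  have "(\<Sum>i<n. \<Sum>j<n. cnj (cnj (q i)) * R i j * cnj (q j))
      = (\<Sum>j<n. \<Sum>i<n. q i * R i j * cnj (q j))"
    by (subst sum.swap) simp
  also have "\<dots> = (\<Sum>j<n. cnj (q j) * bil n R q j)"
    unfolding bil_def by (simp add: sum_distrib_left algebra_simps)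
  also have "\<dots> = (\<Sum>j<n. if j = k then vv' n R k l else 0)"
  proof (rule sum.cong[OF refl])
    fix j assume "j \<in> {..<n}"
    show "cnj (q j) * bil n R q j = (if j = k then vv' n R k l else 0)"
    proof (cases "j < k \<or> l < j")
      case True
      then show ?thesis using supp[of k l j n R] assms(2) by (auto simp: q_def)
    next
      case False
      then show ?thesis using I unfolding inv_def vv'_def q_def by auto
    qed
  qed
  also have "\<dots> = vv' n R k l" using assms(2,3) by simp
  finally have E: "(\<Sum>i<n. \<Sum>j<n. cnj (cnj (q i)) * R i j * cnj (q j)) = vv' n R k l" .
  have nz: "cnj (q k) \<noteq> 0" using I by (simp add: inv_def q_def)
  have G: "Re (\<Sum>i<n. \<Sum>j<n. cnj (cnj (q i)) * R i j * cnj (q j)) > 0"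
    by (rule form_pos[OF P, of "\<lambda>i. cnj (q i)" k]) (use nz assms in auto)
  then show ?thesis unfolding E by auto
qed

lemma inv_all:
  assumes P: "pos_def_mat n R"
  shows "k \<le> l \<Longrightarrow> l < n \<Longrightarrow> inv n R k l"
proof (induct "l - k" arbitrary: k l rule: less_induct)
  case less
  show ?case
  proof (cases "k = l")
    case True
    then show ?thesis by (auto simp add: inv_def pvec_base qvec_base evec_def)
  next
    case False
    then have kl: "k < l" using less by simp
    have A: "inv n R k (l-1)" using less kl by auto
    have B: "inv n R (Suc k) l" using less kl by auto
    have v2: "vv n R (Suc k) l \<noteq> 0" using vv_nz[OF P _ _ B] kl less by auto
    have v1: "vv' n R k (l-1) \<noteq> 0" using vv'_nz[OF P _ _ A] kl less by auto
    have s1: "qvec n R (Suc k) l k = 0" using supp[of "Suc k" l k n R] kl by auto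
    have s2: "pvec n R k (l-1) l = 0" using supp[of k "l-1" l n R] kl by auto
    have p1: "pvec n R k l k = 1" using A s1 kl by (simp add: pvec_step inv_def)
    have q1: "qvec n R k l l = 1" using B s2 kl by (simp add: qvec_step inv_def)
    have pb: "bil n R (pvec n R k l) j = 0" if "k < j" "j \<le> l" for j
    proof (cases "j = l")
      case True
      have "bil n R (pvec n R k l) l = bil n R (pvec n R k (l-1)) l - acoef n R k l * vv n R (Suc k) l"
        by (simp only: pvec_step[OF kl] bil_lin vv_def)
      then show ?thesis using v2 True by (simp add: acoef_def)
    next
      case False
      then show ?thesis using A B that kl
        by (simp add: pvec_step bil_lin inv_def)
    qed
    have qb: "bil n R (qvec n R k l) j = 0" if "k \<le> j" "j < l" for j
    proof (cases "j = k")
      case True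
      have "bil n R (qvec n R k l) k = bil n R (qvec n R (Suc k) l) k - acoef' n R k l * vv' n R k (l-1)"
        by (simp only: qvec_step[OF kl] bil_lin vv'_def)
      then show ?thesis using v1 True by (simp add: acoef'_def)
    next
      case False
      then show ?thesis using A B that kl
        by (simp add: qvec_step bil_lin inv_def)
    qed
    show ?thesis using p1 q1 pb qb by (simp add: inv_def)
  qed
qed

lemma bil_trunc:
  assumes "\<And>i. x i \<noteq> 0 \<Longrightarrow> s \<le> i \<and> i \<le> d" "s \<le> j" "j \<le> d"
  shows "bil n (trunc_mat R s d) x j = bil n R x j"
  unfolding bil_def
proof (rule sum.cong[OF refl])
  fix i show "x i * trunc_mat R s d i j = x i * R i j"
    using assms by (cases "x i = 0") (auto simp: trunc_mat_def)
qed

lemma supp_in: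
  assumes "s \<le> k" "k \<le> l" "l \<le> d"
  shows "pvec n M k l i \<noteq> 0 \<Longrightarrow> s \<le> i \<and> i \<le> d"
    and "qvec n M k l i \<noteq> 0 \<Longrightarrow> s \<le> i \<and> i \<le> d"
  using supp[of k l i n M] assms by (meson le_trans not_le)+

lemma pq_eq:
  shows "s \<le> k \<Longrightarrow> k \<le> l \<Longrightarrow> l \<le> d \<Longrightarrow>
    pvec n (trunc_mat R s d) k l = pvec n R k l \<and> qvec n (trunc_mat R s d) k l = qvec n R k l"
proof (induct "l - k" arbitrary: k l rule: less_induct)
  case less
  show ?case
  proof (cases "k = l")
    case True
    then show ?thesis by (simp add: pvec_base qvec_base)
  next
    case False
    then have kl: "k < l" using less by simp
    have A: "pvec n (trunc_mat R s d) k (l-1) = pvec n R k (l-1)" using less kl by auto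
    have B: "qvec n (trunc_mat R s d) (Suc k) l = qvec n R (Suc k) l" using less kl by auto
    have sA: "\<And>i. pvec n R k (l-1) i \<noteq> 0 \<Longrightarrow> s \<le> i \<and> i \<le> d"
      using supp_in(1)[of s k "l-1" d n R] less kl by auto
    have sB: "\<And>i. qvec n R (Suc k) l i \<noteq> 0 \<Longrightarrow> s \<le> i \<and> i \<le> d"
      using supp_in(2)[of s "Suc k" l d n R] less kl by auto
    have a: "acoef n (trunc_mat R s d) k l = acoef n R k l"
      unfolding acoef_def vv_def A B using bil_trunc[OF sA] bil_trunc[OF sB] less by simp
    have a': "acoef' n (trunc_mat R s d) k l = acoef' n R k l"
      unfolding acoef'_def vv'_def A B using bil_trunc[OF sA] bil_trunc[OF sB] less kl by simp
    show ?thesis using kl A B a a' by (simp add: pvec_step qvec_step)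
  qed
qed

lemma vv_eq:
  assumes "s \<le> k" "k \<le> l" "l \<le> d"
  shows "vv n (trunc_mat R s d) k l = vv n R k l \<and> vv' n (trunc_mat R s d) k l = vv' n R k l"
proof -
  have sA: "\<And>i. pvec n R k l i \<noteq> 0 \<Longrightarrow> s \<le> i \<and> i \<le> d"
    using supp_in(1)[OF assms] by auto
  have sB: "\<And>i. qvec n R k l i \<noteq> 0 \<Longrightarrow> s \<le> i \<and> i \<le> d"
    using supp_in(2)[OF assms] by auto
  show ?thesis unfolding vv_def vv'_def using pq_eq[OF assms, of n R]
      bil_trunc[OF sA] bil_trunc[OF sB] assms by simp
qed

theorem mainTheorem2:
  fixes n s d :: nat and R :: "nat \<Rightarrow> nat \<Rightarrow> complex"
  assumes "pos_def_mat n R"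
    and "s < d" and "d \<le> n - 1"
  defines "M \<equiv> trunc_mat R s d"
  shows "\<forall>k l. s \<le> k \<and> k < l \<and> l \<le> d \<longrightarrow>
           well_defined_at n M k l \<and>
           pvec n M k l = pvec n R k l \<and> qvec n M k l = qvec n R k l \<and>
           acoef n M k l = acoef n R k l \<and> acoef' n M k l = acoef' n R k l \<and>
           vv n M k l = vv n R k l \<and> vv' n M k l = vv' n R k l"
proof (intro allI impI)
  fix k l assume H: "s \<le> k \<and> k < l \<and> l \<le> d"
  have dn: "d < n" using assms(2,3) by linarith
  have E1: "pvec n M k l = pvec n R k l \<and> qvec n M k l = qvec n R k l"
    unfolding M_def using pq_eq[of s k l d n R] H by auto
  have E2: "vv n M k l = vv n R k l \<and> vv' n M k l = vv' n R k l"
    unfolding M_def using vv_eq[of s k l d n R] H by auto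
  have E3: "pvec n M k (l-1) = pvec n R k (l-1)"
    unfolding M_def using pq_eq[of s k "l-1" d n R] H by auto
  have E4: "vv n M (Suc k) l = vv n R (Suc k) l \<and> vv' n M k (l-1) = vv' n R k (l-1)"
    unfolding M_def using vv_eq[of s "Suc k" l d n R] vv_eq[of s k "l-1" d n R] H by auto
  have E5: "qvec n M (Suc k) l = qvec n R (Suc k) l"
    unfolding M_def using pq_eq[of s "Suc k" l d n R] H by auto
  have sA: "\<And>i. pvec n R k (l-1) i \<noteq> 0 \<Longrightarrow> s \<le> i \<and> i \<le> d"
    using supp_in(1)[of s k "l-1" d n R] H by auto
  have sB: "\<And>i. qvec n R (Suc k) l i \<noteq> 0 \<Longrightarrow> s \<le> i \<and> i \<le> d"
    using supp_in(2)[of s "Suc k" l d n R] H by auto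
  have a: "acoef n M k l = acoef n R k l"
    unfolding acoef_def E3 E4[THEN conjunct1] using bil_trunc[OF sA] H by (simp add: M_def)
  have a': "acoef' n M k l = acoef' n R k l"
    unfolding acoef'_def E5 E4[THEN conjunct2] using bil_trunc[OF sB] H by (simp add: M_def)
  have w1: "vv n R (Suc k) l \<noteq> 0"
    using vv_nz[OF assms(1) _ _ inv_all[OF assms(1)]] H dn by auto
  have w2: "vv' n R k (l-1) \<noteq> 0"
    using vv'_nz[OF assms(1) _ _ inv_all[OF assms(1)]] H dn by auto
  show "well_defined_at n M k l \<and>
           pvec n M k l = pvec n R k l \<and> qvec n M k l = qvec n R k l \<and>
           acoef n M k l = acoef n R k l \<and> acoef' n M k l = acoef' n R k l \<and>
           vv n M k l = vv n R k l \<and> vv' n M k l = vv' n R k l"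
    using E1 E2 E4 a a' w1 w2 by (simp add: well_defined_at_def)
qed

end
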